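(* Let $P,K:\mathbb{N}_0\to\mathbb{N}_0$ be a scaling for which the limit $q^\star=\lim_{n\to\infty}q(\theta_n)$ exists. Then $\lim_{n\to\infty}\mathbb{P}[T_n(\theta_n)>0]=1$ holds if either $0\le q^\star<1$, or $q^\star=1$ and $\lim_{n\to\infty}n^3\tau(\theta_n)=\infty$.
   Context: Random key graph: for positive integers $K\le P$, $\theta=(K,P)$ and $n\ge3$, let $K_1(\theta),\dots,K_n(\theta)$ be i.i.d. random subsets of $\{1,\dots,P\}$, each uniform over the $K$-element subsets; the random key graph $\mathbb{K}(n;\theta)$ on $\{1,\dots,n\}$ has an edge between distinct $i,j$ iff $K_i(\theta)\cap K_j(\theta)\ne\emptyset$. $T_n(\theta)$ denotes the number of triangles in $\mathbb{K}(n;\theta)$. $q(\theta)=\binom{P-K}{K}/\binom{P}{K}$ if $2K\le P$ and $q(\theta)=0$ if $P<2K$. $\tau(\theta)=K^3/P^2+(K^2/P)^3$. A scaling is a pair of functions $P,K:\mathbb{N}_0\to\mathbb{N}_0$ with $1\le K_n\le P_n$ for all $n$, and $\theta_n=(K_n,P_n)$. *)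

theory Defs
  imports "HOL-Probability.Probability"
begin

definition key_rings :: "nat \<Rightarrow> nat \<Rightarrow> nat set set" where
  "key_rings K P = {S. S \<subseteq> {1..P} \<and> card S = K}"

text \<open>Random key graph: node i gets key ring f i, chosen i.i.d. uniformly
  among the K-subsets of {1..P}; the joint law of (K_1,...,K_n).\<close>
definition rkg_pmf :: "nat \<Rightarrow> nat \<Rightarrow> nat \<Rightarrow> (nat \<Rightarrow> nat set) pmf" where
  "rkg_pmf n K P = Pi_pmf {1..n} {} (\<lambda>_. pmf_of_set (key_rings K P))"

definition rkg_edge :: "(nat \<Rightarrow> nat set) \<Rightarrow> nat \<Rightarrow> nat \<Rightarrow> bool" where
  "rkg_edge f i j \<longleftrightarrow> i \<noteq> j \<and> f i \<inter> f j \<noteq> {}"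

definition triangles :: "nat \<Rightarrow> (nat \<Rightarrow> nat set) \<Rightarrow> nat" where
  "triangles n f = card {T. T \<subseteq> {1..n} \<and> card T = 3 \<and>
      (\<forall>i\<in>T. \<forall>j\<in>T. i \<noteq> j \<longrightarrow> rkg_edge f i j)}"

text \<open>P[T_n(theta) > 0] with theta = (K,P).\<close>
definition prob_triangle :: "nat \<Rightarrow> nat \<Rightarrow> nat \<Rightarrow> real" where
  "prob_triangle n K P = measure_pmf.prob (rkg_pmf n K P) {f. triangles n f > 0}"

definition q_rkg :: "nat \<Rightarrow> nat \<Rightarrow> real" where
  "q_rkg K P = (if 2 * K \<le> P then real ((P - K) choose K) / real (P choose K) else 0)"

definition tau_rkg :: "nat \<Rightarrow> nat \<Rightarrow> real" where
  "tau_rkg K P = real K ^ 3 / real P ^ 2 + (real K ^ 2 / real P) ^ 3"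

end

theory Submission
  imports Defs
begin


lemma second_moment:
  fixes M :: "'a pmf" and E :: "'b \<Rightarrow> 'a set" and A :: "'b set"
  assumes fin: "finite A" and mu: "\<mu> = (\<Sum>\<alpha>\<in>A. measure_pmf.prob M (E \<alpha>))" and pos: "\<mu> > 0"
  shows "measure_pmf.prob M {x. \<forall>\<alpha>\<in>A. x \<notin> E \<alpha>} \<le>
     ((\<Sum>\<alpha>\<in>A. \<Sum>\<beta>\<in>A. measure_pmf.prob M (E \<alpha> \<inter> E \<beta>)) - \<mu>^2) / \<mu>^2"
proof -
  define X where "X = (\<lambda>x. \<Sum>\<alpha>\<in>A. indicator (E \<alpha>) x :: real)"
  define Z where "Z = {x. \<forall>\<alpha>\<in>A. x \<notin> E \<alpha>}"
  have bX: "\<bar>X x\<bar> \<le> real (card A)" for x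
    unfolding X_def
    by (rule order.trans[OF sum_abs]) (rule order.trans[OF sum_mono[of _ _ "\<lambda>_. 1"]], auto simp: indicator_def)
  have int: "integrable (measure_pmf M) f" if "\<And>x. \<bar>f x\<bar> \<le> B" for f :: "'a \<Rightarrow> real" and B
    by (rule measure_pmf.integrable_const_bound[where B=B]) (use that in auto)
  have intI: "integrable (measure_pmf M) (indicator S :: 'a \<Rightarrow> real)" for S
    by (rule int[where B=1]) (simp add: indicator_def)
  have EX: "measure_pmf.expectation M X = \<mu>"
    unfolding X_def mu by (subst Bochner_Integration.integral_sum) (auto intro: int[where B=1] simp: indicator_def)
  have X2: "(X x)^2 = (\<Sum>\<alpha>\<in>A. \<Sum>\<beta>\<in>A. indicator (E \<alpha> \<inter> E \<beta>) x)" for x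
    unfolding X_def power2_eq_square sum_product by (auto simp: indicator_def intro!: sum.cong)
  have EX2: "measure_pmf.expectation M (\<lambda>x. (X x)^2) = (\<Sum>\<alpha>\<in>A. \<Sum>\<beta>\<in>A. measure_pmf.prob M (E \<alpha> \<inter> E \<beta>))"
    unfolding X2
    apply (subst Bochner_Integration.integral_sum)
     apply (rule Bochner_Integration.integrable_sum, rule intI)
    apply (rule sum.cong, simp)
    apply (subst Bochner_Integration.integral_sum)
     apply (rule intI)
    apply simp
    done
  have ineq: "\<mu>^2 * indicator Z x \<le> (X x - \<mu>)^2" for x
  proof (cases "x \<in> Z")
    case True
    then have "X x = 0" unfolding X_def Z_def by (auto intro!: sum.neutral simp: indicator_def)
    then show ?thesis using True by simp
  qed simp
  have "\<mu>^2 * measure_pmf.prob M Z = measure_pmf.expectation M (\<lambda>x. \<mu>^2 * indicator Z x)"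
    by simp
  also have "\<dots> \<le> measure_pmf.expectation M (\<lambda>x. (X x - \<mu>)^2)"
    apply (rule integral_mono)
      apply (rule int[where B="\<mu>^2"], simp add: indicator_def)
     apply (rule int[where B="(real (card A) + \<bar>\<mu>\<bar>)^2"])
    subgoal for x
    proof -
      have "\<bar>X x - \<mu>\<bar> \<le> real (card A) + \<bar>\<mu>\<bar>" using bX[of x] by linarith
      then have "\<bar>X x - \<mu>\<bar>^2 \<le> (real (card A) + \<bar>\<mu>\<bar>)^2" by (rule power_mono) simp
      then show ?thesis by simp
    qed
    using ineq by auto
  also have "(\<lambda>x. (X x - \<mu>)^2) = (\<lambda>x. (X x)^2 - 2*\<mu> * X x + \<mu>^2)"
    by (auto simp: power2_eq_square algebra_simps)
  also have "measure_pmf.expectation M \<dots> = measure_pmf.expectation M (\<lambda>x. (X x)^2) - 2*\<mu>*measure_pmf.expectation M X + \<mu>^2"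
    apply (subst Bochner_Integration.integral_add)
      apply (rule Bochner_Integration.integrable_diff)
       apply (rule int[where B="real (card A)^2"])
    subgoal for x proof -
      have "\<bar>X x\<bar>^2 \<le> real (card A)^2" using bX[of x] by (rule power_mono) simp
      then show ?thesis by simp
    qed
      apply (rule integrable_mult_right, rule int, rule bX)
     apply simp
    apply (subst Bochner_Integration.integral_diff)
      apply (rule int[where B="real (card A)^2"])
    subgoal for x proof -
      have "\<bar>X x\<bar>^2 \<le> real (card A)^2" using bX[of x] by (rule power_mono) simp
      then show ?thesis by simp
    qed
     apply (rule integrable_mult_right, rule int, rule bX)
    by simp
  finally have "\<mu>^2 * measure_pmf.prob M Z \<le> (\<Sum>\<alpha>\<in>A. \<Sum>\<beta>\<in>A. measure_pmf.prob M (E \<alpha> \<inter> E \<beta>)) - \<mu>^2"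
    unfolding EX EX2 by (simp add: power2_eq_square)
  then show ?thesis unfolding Z_def[symmetric] using pos by (simp add: field_simps)
qed



definition rho :: "nat \<Rightarrow> nat \<Rightarrow> nat \<Rightarrow> real" where
  "rho K P s = (\<Prod>i<s. (real K - real i) / (real P - real i))"

lemma rho_0[simp]: "rho K P 0 = 1" by (simp add: rho_def)
lemma rho_Suc: "rho K P (Suc s) = rho K P s * ((real K - real s) / (real P - real s))"
  by (simp add: rho_def)

lemma rho_zero: "K < s \<Longrightarrow> rho K P s = 0"
  unfolding rho_def by (rule prod_zero) auto

lemma card_contain:
  assumes B: "B \<subseteq> {1..P}" and bK: "card B \<le> K"
  shows "card {S \<in> key_rings K P. B \<subseteq> S} = (P - card B) choose (K - card B)"
proof -
  have fB: "finite B" using B finite_subset by blast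
  have "bij_betw (\<lambda>S. S - B) {S \<in> key_rings K P. B \<subseteq> S} {T. T \<subseteq> {1..P} - B \<and> card T = K - card B}"
  proof (rule bij_betwI[where g="\<lambda>T. T \<union> B"])
    show "(\<lambda>S. S - B) \<in> {S \<in> key_rings K P. B \<subseteq> S} \<rightarrow> {T. T \<subseteq> {1..P} - B \<and> card T = K - card B}"
    proof
      fix S assume "S \<in> {S \<in> key_rings K P. B \<subseteq> S}"
      then have S: "S \<subseteq> {1..P}" "card S = K" "B \<subseteq> S" by (auto simp: key_rings_def)
      then have "finite S" using finite_subset by blast
      then show "S - B \<in> {T. T \<subseteq> {1..P} - B \<and> card T = K - card B}"
        using S by (auto simp: card_Diff_subset fB)
    qed
    show "(\<lambda>T. T \<union> B) \<in> {T. T \<subseteq> {1..P} - B \<and> card T = K - card B} \<rightarrow> {S \<in> key_rings K P. B \<subseteq> S}"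
    proof
      fix T assume T: "T \<in> {T. T \<subseteq> {1..P} - B \<and> card T = K - card B}"
      then have "finite T" using finite_subset[of T "{1..P}"] by auto
      moreover have "T \<inter> B = {}" using T by auto
      ultimately have "card (T \<union> B) = K" using T bK fB by (simp add: card_Un_disjoint)
      then show "T \<union> B \<in> {S \<in> key_rings K P. B \<subseteq> S}" using T B by (auto simp: key_rings_def)
    qed
  qed auto
  then have "card {S \<in> key_rings K P. B \<subseteq> S} = card {T. T \<subseteq> {1..P} - B \<and> card T = K - card B}"
    by (rule bij_betw_same_card)
  also have "\<dots> = card ({1..P} - B) choose (K - card B)" by (rule n_subsets) simp
  also have "card ({1..P} - B) = P - card B" using B fB by (simp add: card_Diff_subset)
  finally show ?thesis .
qed

lemma binom_ratio:
  assumes "b \<le> K" "K \<le> P"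
  shows "real ((P - b) choose (K - b)) = rho K P b * real (P choose K)"
  using assms(1)
proof (induction b)
  case 0 then show ?case by simp
next
  case (Suc b)
  have IH: "real ((P - b) choose (K - b)) = rho K P b * real (P choose K)" using Suc by simp
  have kb: "K - b = Suc (K - Suc b)" and pb: "P - b = Suc (P - Suc b)" using Suc.prems assms(2) by auto
  have "Suc (K - Suc b) * (Suc (P - Suc b) choose Suc (K - Suc b)) = Suc (P - Suc b) * ((P - Suc b) choose (K - Suc b))"
    by (rule Suc_times_binomial)
  then have "real (K - b) * real ((P - b) choose (K - b)) = real (P - b) * real ((P - Suc b) choose (K - Suc b))"
    unfolding kb[symmetric] pb[symmetric] by (metis of_nat_mult)
  moreover have "real (P - b) > 0" using Suc.prems assms(2) by simp
  ultimately have "real ((P - Suc b) choose (K - Suc b)) = real (K - b) / real (P - b) * real ((P - b) choose (K - b))"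
    by (simp add: field_simps)
  also have "\<dots> = rho K P (Suc b) * real (P choose K)"
    using Suc.prems assms(2) by (simp add: IH rho_Suc of_nat_diff)
  finally show ?case .
qed

lemma key_rings_finite: "finite (key_rings K P)"
  unfolding key_rings_def by (rule finite_subset[of _ "Pow {1..P}"]) auto

lemma key_rings_card: "card (key_rings K P) = P choose K"
  unfolding key_rings_def using n_subsets[of "{1..P}" K] by simp

lemma key_rings_ne: "K \<le> P \<Longrightarrow> key_rings K P \<noteq> {}"
proof -
  assume "K \<le> P"
  then have "{1..K} \<in> key_rings K P" by (auto simp: key_rings_def)
  then show ?thesis by blast
qed

lemma prob_contain:
  assumes B: "B \<subseteq> {1..P}" and KP: "K \<le> P"
  shows "measure_pmf.prob (pmf_of_set (key_rings K P)) {S. B \<subseteq> S} = rho K P (card B)"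
proof -
  have "measure_pmf.prob (pmf_of_set (key_rings K P)) {S. B \<subseteq> S}
      = real (card (key_rings K P \<inter> {S. B \<subseteq> S})) / real (card (key_rings K P))"
    by (rule measure_pmf_of_set[OF key_rings_ne[OF KP] key_rings_finite])
  also have "key_rings K P \<inter> {S. B \<subseteq> S} = {S \<in> key_rings K P. B \<subseteq> S}" by auto
  finally have eq: "measure_pmf.prob (pmf_of_set (key_rings K P)) {S. B \<subseteq> S} =
      real (card {S \<in> key_rings K P. B \<subseteq> S}) / real (P choose K)"
    by (simp add: key_rings_card)
  have pos: "real (P choose K) > 0" using KP by simp
  show ?thesis
  proof (cases "card B \<le> K")
    case True
    show ?thesis unfolding eq card_contain[OF B True] binom_ratio[OF True KP] using pos by simp
  next
    case False
    have "{S \<in> key_rings K P. B \<subseteq> S} = {}"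
    proof (rule ccontr)
      assume "{S \<in> key_rings K P. B \<subseteq> S} \<noteq> {}"
      then obtain S where S: "S \<in> key_rings K P" "B \<subseteq> S" by blast
      then have "finite S" "card S = K" using finite_subset[of S "{1..P}"] by (auto simp: key_rings_def)
      then have "card B \<le> K" using S card_mono by metis
      then show False using False by simp
    qed
    then show ?thesis unfolding eq using False rho_zero[of K "card B" P] by (simp del: Collect_empty_eq)
  qed
qed

definition ev :: "nat \<Rightarrow> (nat \<Rightarrow> nat set) \<Rightarrow> (nat \<Rightarrow> nat set) set" where
  "ev n R = {f. \<forall>x\<in>{1..n}. R x \<subseteq> f x}"

lemma prob_ev:
  assumes "\<And>x. R x \<subseteq> {1..P}" and KP: "K \<le> P"
  shows "measure_pmf.prob (rkg_pmf n K P) (ev n R) = (\<Prod>x\<in>{1..n}. rho K P (card (R x)))"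
proof -
  have "ev n R = Pi {1..n} (\<lambda>x. {S. R x \<subseteq> S})" by (auto simp: ev_def Pi_def)
  then show ?thesis unfolding rkg_pmf_def
    by (simp add: measure_Pi_pmf_Pi prob_contain[OF assms(1) KP])
qed



definition pt :: "nat \<Rightarrow> nat set \<Rightarrow> nat \<Rightarrow> nat set" where
  "pt p S x = (if x = p then S else {})"

definition R3 :: "nat \<Rightarrow> nat \<Rightarrow> nat \<Rightarrow> nat \<Rightarrow> nat set \<Rightarrow> nat set \<Rightarrow> nat set \<Rightarrow> nat \<Rightarrow> nat set" where
  "R3 m i j l SA SB SC x = pt (Suc i) SA x \<union> pt (m + Suc j) SB x \<union> pt (2*m + Suc l) SC x"

definition bv :: "nat \<Rightarrow> nat \<Rightarrow> nat \<Rightarrow> nat \<Rightarrow> nat set \<Rightarrow> nat set \<Rightarrow> real" where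
  "bv K P i i' S S' = (if i = i' then rho K P (card (S \<union> S')) else rho K P (card S) * rho K P (card S'))"

lemma two_point:
  assumes "p \<in> {1..n}" "p' \<in> {1..n}"
  shows "(\<Prod>x\<in>{1..n}. rho K P (card (pt p S x \<union> pt p' S' x))) =
         (if p = p' then rho K P (card (S \<union> S')) else rho K P (card S) * rho K P (card S'))"
proof -
  have "(\<Prod>x\<in>{1..n}. rho K P (card (pt p S x \<union> pt p' S' x))) =
        (\<Prod>x\<in>{p,p'}. rho K P (card (pt p S x \<union> pt p' S' x)))"
    by (rule prod.mono_neutral_right) (use assms in \<open>auto simp: pt_def\<close>)
  then show ?thesis by (cases "p = p'") (auto simp: pt_def)
qed

lemma prob_pair:
  assumes mn: "3*m \<le> n" and idx: "i < m" "i' < m" "j < m" "j' < m" "l < m" "l' < m"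
    and sets: "SA \<subseteq> {1..P}" "SB \<subseteq> {1..P}" "SC \<subseteq> {1..P}" "SA' \<subseteq> {1..P}" "SB' \<subseteq> {1..P}" "SC' \<subseteq> {1..P}"
    and KP: "K \<le> P"
  shows "measure_pmf.prob (rkg_pmf n K P) (ev n (R3 m i j l SA SB SC) \<inter> ev n (R3 m i' j' l' SA' SB' SC')) =
     bv K P i i' SA SA' * bv K P j j' SB SB' * bv K P l l' SC SC'"
proof -
  let ?R = "\<lambda>x. R3 m i j l SA SB SC x \<union> R3 m i' j' l' SA' SB' SC' x"
  have "ev n (R3 m i j l SA SB SC) \<inter> ev n (R3 m i' j' l' SA' SB' SC') = ev n ?R"
    by (auto simp: ev_def)
  moreover have "?R x \<subseteq> {1..P}" for x using sets by (auto simp: R3_def pt_def)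
  ultimately have "measure_pmf.prob (rkg_pmf n K P) (ev n (R3 m i j l SA SB SC) \<inter> ev n (R3 m i' j' l' SA' SB' SC'))
      = (\<Prod>x\<in>{1..n}. rho K P (card (?R x)))" using prob_ev[OF _ KP] by simp
  also have "\<dots> = (\<Prod>x\<in>{1..n}. rho K P (card (pt (Suc i) SA x \<union> pt (Suc i') SA' x)) *
        rho K P (card (pt (m + Suc j) SB x \<union> pt (m + Suc j') SB' x)) *
        rho K P (card (pt (2*m + Suc l) SC x \<union> pt (2*m + Suc l') SC' x)))"
  proof (rule prod.cong[OF refl])
    fix x
    consider "x \<le> m" | "m < x \<and> x \<le> 2*m" | "2*m < x" by linarith
    then show "rho K P (card (?R x)) = rho K P (card (pt (Suc i) SA x \<union> pt (Suc i') SA' x)) *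
        rho K P (card (pt (m + Suc j) SB x \<union> pt (m + Suc j') SB' x)) *
        rho K P (card (pt (2*m + Suc l) SC x \<union> pt (2*m + Suc l') SC' x))"
      using idx by cases (auto simp: R3_def pt_def Un_ac)
  qed
  also have "\<dots> = bv K P i i' SA SA' * bv K P j j' SB SB' * bv K P l l' SC SC'"
  proof -
    have "(\<Prod>x\<in>{1..n}. rho K P (card (pt (Suc i) SA x \<union> pt (Suc i') SA' x))) = bv K P i i' SA SA'"
      unfolding bv_def by (subst two_point) (use idx mn in auto)
    moreover have "(\<Prod>x\<in>{1..n}. rho K P (card (pt (m + Suc j) SB x \<union> pt (m + Suc j') SB' x))) = bv K P j j' SB SB'"
      unfolding bv_def by (subst two_point) (use idx mn in auto)
    moreover have "(\<Prod>x\<in>{1..n}. rho K P (card (pt (2*m + Suc l) SC x \<union> pt (2*m + Suc l') SC' x))) = bv K P l l' SC SC'"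
      unfolding bv_def by (subst two_point) (use idx mn in auto)
    ultimately show ?thesis unfolding prod.distrib by simp
  qed
  finally show ?thesis .
qed

lemma triangle_pos:
  assumes "a \<in> {1..n}" "b \<in> {1..n}" "c \<in> {1..n}" "a \<noteq> b" "b \<noteq> c" "a \<noteq> c"
    and "f a \<inter> f b \<noteq> {}" "f b \<inter> f c \<noteq> {}" "f c \<inter> f a \<noteq> {}"
  shows "triangles n f > 0"
proof -
  let ?T = "{T. T \<subseteq> {1..n} \<and> card T = 3 \<and> (\<forall>i\<in>T. \<forall>j\<in>T. i \<noteq> j \<longrightarrow> rkg_edge f i j)}"
  have "finite ?T" by (rule finite_subset[of _ "Pow {1..n}"]) auto
  moreover have "{a,b,c} \<in> ?T" using assms by (auto simp: rkg_edge_def Int_commute)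
  ultimately show ?thesis unfolding triangles_def by (auto simp: card_gt_0_iff)
qed

lemma ev_R3_tri:
  assumes mn: "3*m \<le> n" and idx: "i < m" "j < m" "l < m"
    and "SA \<inter> SB \<noteq> {}" "SB \<inter> SC \<noteq> {}" "SC \<inter> SA \<noteq> {}"
    and f: "f \<in> ev n (R3 m i j l SA SB SC)"
  shows "triangles n f > 0"
proof -
  have "SA \<subseteq> f (Suc i)" using f idx mn by (auto simp: ev_def R3_def pt_def dest!: bspec[of _ _ "Suc i"])
  moreover have "SB \<subseteq> f (m + Suc j)" using f idx mn by (auto simp: ev_def R3_def pt_def dest!: bspec[of _ _ "m + Suc j"])
  moreover have "SC \<subseteq> f (2*m + Suc l)" using f idx mn by (auto simp: ev_def R3_def pt_def dest!: bspec[of _ _ "2*m + Suc l"])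
  ultimately show ?thesis using assms
    by (intro triangle_pos[of "Suc i" n "m + Suc j" "2*m + Suc l"]) auto
qed



lemma sum_if_eq:
  assumes "finite I" "i \<in> I"
  shows "(\<Sum>i'\<in>I. if i = i' then a else b) = a + (real (card I) - 1) * (b::real)"
proof -
  have "(\<Sum>i'\<in>I. if i = i' then a else b) = a + (\<Sum>i'\<in>I - {i}. if i = i' then a else b)"
    using assms by (simp add: sum.remove)
  also have "(\<Sum>i'\<in>I - {i}. if i = i' then a else b) = (\<Sum>i'\<in>I - {i}. b)"
    by (rule sum.cong) auto
  also have "\<dots> = (real (card I) - 1) * b"
  proof -
    have "card I \<ge> 1" using assms by (metis One_nat_def Suc_leI card_gt_0_iff empty_iff)
    then show ?thesis using assms by (simp add: of_nat_diff)
  qed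
  finally show ?thesis .
qed

lemma sum_sep3:
  "(\<Sum>z\<in>I \<times> (J \<times> L). f (fst z) * g (fst (snd z)) * h (snd (snd z))) = sum f I * sum g J * (sum h L :: real)"
proof -
  have "(\<Sum>z\<in>I \<times> (J \<times> L). f (fst z) * g (fst (snd z)) * h (snd (snd z))) =
     (\<Sum>x\<in>I. \<Sum>y\<in>J. \<Sum>w\<in>L. f x * (g y * h w))" by (simp add: sum.cartesian_product' mult.assoc)
  also have "\<dots> = (\<Sum>x\<in>I. f x * (\<Sum>y\<in>J. g y * (\<Sum>w\<in>L. h w)))"
    by (simp add: sum_distrib_left)
  also have "\<dots> = sum f I * (sum g J * sum h L)"
    by (simp only: sum_distrib_right[symmetric])
  also have "\<dots> = sum f I * sum g J * sum h L" by (simp add: mult.assoc)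
  finally show ?thesis .
qed

lemma rho_1: "rho K P 1 = real K / real P" by (simp add: rho_def)
lemma rho_Suc0[simp]: "rho K P (Suc 0) = real K / real P" by (simp add: rho_def)
lemma rho_2: "rho K P 2 = real K / real P * ((real K - 1) / (real P - 1))"
  by (simp add: rho_def numeral_2_eq_2)

lemma rho_nonneg: assumes "K \<le> P" shows "rho K P s \<ge> 0"
proof (cases "K < s")
  case True then show ?thesis by (simp add: rho_zero)
next
  case False
  then show ?thesis unfolding rho_def using assms by (intro prod_nonneg) auto
qed

lemma rho2_le: assumes "1 \<le> K" "K \<le> P" shows "rho K P 2 \<le> (real K / real P)^2"
proof (cases "P \<le> 1")
  case True
  then have "P = 1 \<and> K = 1" using assms by auto
  then show ?thesis by (auto simp: rho_2 power2_eq_square)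
next
  case False
  then have "(real K - 1) / (real P - 1) \<le> real K / real P" using assms
    by (simp add: divide_simps) (simp add: algebra_simps)
  then show ?thesis unfolding rho_2 power2_eq_square
    by (intro mult_left_mono) auto
qed

lemma design_a:
  assumes n3: "3 \<le> n" and K1: "1 \<le> K" and KP: "K \<le> P"
  shows "measure_pmf.prob (rkg_pmf n K P) {f. \<not> triangles n f > 0} \<le>
           ((1 + real P / (real K * real (n div 3)))^3 - 1) / real P"
proof -
  define m where "m = n div 3"
  have m1: "1 \<le> m" and mn: "3*m \<le> n" using n3 by (auto simp: m_def)
  define A where "A = {1..P} \<times> ({..<m} \<times> ({..<m} \<times> {..<m}))"
  define E where "E = (\<lambda>\<alpha>::nat\<times>nat\<times>nat\<times>nat. case \<alpha> of (k,i,j,l) \<Rightarrow> ev n (R3 m i j l {k} {k} {k}))"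
  define r where "r = real K / real P"
  have rpos: "r > 0" using K1 KP by (simp add: r_def)
  define M where "M = rkg_pmf n K P"
  have pairprob: "measure_pmf.prob M (E \<alpha> \<inter> E \<beta>) =
       bv K P (fst (snd \<alpha>)) (fst (snd \<beta>)) {fst \<alpha>} {fst \<beta>} *
       bv K P (fst (snd (snd \<alpha>))) (fst (snd (snd \<beta>))) {fst \<alpha>} {fst \<beta>} *
       bv K P (snd (snd (snd \<alpha>))) (snd (snd (snd \<beta>))) {fst \<alpha>} {fst \<beta>}"
    if "\<alpha> \<in> A" "\<beta> \<in> A" for \<alpha> \<beta>
    using that unfolding M_def E_def A_def
    by (auto split: prod.splits intro!: prob_pair[OF mn _ _ _ _ _ _ _ _ _ _ _ _ KP])
  have bvk: "bv K P i i' {k} {k'} \<le> r^2 * (if i = i' then (if k = k' then 1/r else 1) else 1)" for i i' k k'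
    using rpos rho2_le[OF K1 KP]
    by (auto simp: bv_def rho_1 r_def power2_eq_square numeral_2_eq_2[symmetric])
  have bvnn: "bv K P i i' {k} {k'} \<ge> 0" for i i' k k'
    using KP rho_nonneg[OF KP] by (auto simp: bv_def)
  have single: "measure_pmf.prob M (E \<alpha>) = r^3" if "\<alpha> \<in> A" for \<alpha>
    using pairprob[OF that that] by (simp add: bv_def rho_1 r_def power3_eq_cube)
  define \<mu> where "\<mu> = (\<Sum>\<alpha>\<in>A. measure_pmf.prob M (E \<alpha>))"
  have mu: "\<mu> = real P * real m^3 * r^3"
    unfolding \<mu>_def by (simp add: single A_def card_cartesian_product power3_eq_cube)
  have mupos: "\<mu> > 0" using mu m1 rpos K1 KP by simp
  have r6: "r^2 * a * (r^2 * b) * (r^2 * c) = r^6 * (a * b * c)" for a b c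
    by (simp add: eval_nat_numeral algebra_simps)
  define G where "G = (\<lambda>e. real m - 1 + (if e then 1/r else 1))"
  have inner: "(\<Sum>\<beta>\<in>A. measure_pmf.prob M (E \<alpha> \<inter> E \<beta>)) \<le> r^6 * ((real P - 1) * real m^3 + G True ^ 3)"
    if a: "\<alpha> \<in> A" for \<alpha>
  proof -
    obtain k i j l where al: "\<alpha> = (k,i,j,l)" and k: "k \<in> {1..P}" and ijl: "i < m" "j < m" "l < m"
      using a unfolding A_def by auto
    have "(\<Sum>\<beta>\<in>A. measure_pmf.prob M (E \<alpha> \<inter> E \<beta>)) \<le>
       (\<Sum>\<beta>\<in>A. r^2 * (if i = fst (snd \<beta>) then (if k = fst \<beta> then 1/r else 1) else 1) *
          (r^2 * (if j = fst (snd (snd \<beta>)) then (if k = fst \<beta> then 1/r else 1) else 1)) *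
          (r^2 * (if l = snd (snd (snd \<beta>)) then (if k = fst \<beta> then 1/r else 1) else 1)))"
      apply (rule sum_mono)
      apply (subst pairprob[OF a], assumption)
      unfolding al fst_conv snd_conv
      apply (intro mult_mono bvk bvnn mult_nonneg_nonneg)
      using rpos by auto
    also have "\<dots> = r^6 * (\<Sum>k'\<in>{1..P}. \<Sum>z\<in>{..<m} \<times> ({..<m} \<times> {..<m}).
         (if i = fst z then (if k = k' then 1/r else 1) else 1) *
         (if j = fst (snd z) then (if k = k' then 1/r else 1) else 1) *
         (if l = snd (snd z) then (if k = k' then 1/r else 1) else 1))"
      unfolding A_def sum.cartesian_product' sum_distrib_left
      by (intro sum.cong refl) (simp add: r6)
    also have "\<dots> = r^6 * (\<Sum>k'\<in>{1..P}. G (k = k') ^ 3)"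
    proof -
      have c: "(\<Sum>z\<in>{..<m} \<times> ({..<m} \<times> {..<m}). (if i = fst z then c else 1) *
          (if j = fst (snd z) then c else 1) * (if l = snd (snd z) then c else 1)) = (real m - 1 + c)^3" for c
        using sum_sep3[of "\<lambda>i'. if i = i' then c else 1" "\<lambda>j'. if j = j' then c else 1" "\<lambda>l'. if l = l' then c else 1"
            "{..<m}" "{..<m}" "{..<m}"]
          sum_if_eq[of "{..<m}" i c 1] sum_if_eq[of "{..<m}" j c 1] sum_if_eq[of "{..<m}" l c 1] ijl
        by (simp add: power3_eq_cube algebra_simps)
      show ?thesis unfolding c G_def by simp
    qed
    also have "(\<Sum>k'\<in>{1..P}. G (k = k') ^ 3) = G True ^ 3 + (real P - 1) * G False ^ 3"
    proof -
      have "(\<Sum>k'\<in>{1..P}. G (k = k') ^ 3) = (\<Sum>k'\<in>{1..P}. if k = k' then G True ^ 3 else G False ^ 3)"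
        by (rule sum.cong) auto
      then show ?thesis using sum_if_eq[of "{1..P}" k "G True ^ 3" "G False ^ 3"] k by simp
    qed
    finally show ?thesis by (simp add: G_def algebra_simps)
  qed
  have S2: "(\<Sum>\<alpha>\<in>A. \<Sum>\<beta>\<in>A. measure_pmf.prob M (E \<alpha> \<inter> E \<beta>)) \<le>
      real P * real m^3 * (r^6 * ((real P - 1) * real m^3 + G True ^ 3))"
  proof -
    have "(\<Sum>\<alpha>\<in>A. \<Sum>\<beta>\<in>A. measure_pmf.prob M (E \<alpha> \<inter> E \<beta>)) \<le>
        (\<Sum>\<alpha>\<in>A. r^6 * ((real P - 1) * real m^3 + G True ^ 3))"
      by (rule sum_mono) (rule inner)
    then show ?thesis by (simp add: A_def card_cartesian_product power3_eq_cube)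
  qed
  have sub: "{f. \<not> triangles n f > 0} \<subseteq> {f. \<forall>\<alpha>\<in>A. f \<notin> E \<alpha>}"
  proof
    fix f assume f: "f \<in> {f. \<not> triangles n f > 0}"
    show "f \<in> {f. \<forall>\<alpha>\<in>A. f \<notin> E \<alpha>}"
    proof (clarify)
      fix \<alpha> assume a: "\<alpha> \<in> A" "f \<in> E \<alpha>"
      obtain k i j l where al: "\<alpha> = (k,i,j,l)" by (cases \<alpha>) auto
      have "triangles n f > 0"
        using a unfolding al A_def E_def by (intro ev_R3_tri[OF mn, of i j l "{k}" "{k}" "{k}"]) auto
      then show False using f by simp
    qed
  qed
  have "measure_pmf.prob M {f. \<not> triangles n f > 0} \<le> measure_pmf.prob M {f. \<forall>\<alpha>\<in>A. f \<notin> E \<alpha>}"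
    by (rule measure_pmf.finite_measure_mono[OF sub]) simp
  also have "\<dots> \<le> ((\<Sum>\<alpha>\<in>A. \<Sum>\<beta>\<in>A. measure_pmf.prob M (E \<alpha> \<inter> E \<beta>)) - \<mu>^2) / \<mu>^2"
    by (rule second_moment[OF _ \<mu>_def mupos]) (simp add: A_def)
  also have "\<dots> \<le> (real P * real m^3 * (r^6 * ((real P - 1) * real m^3 + G True ^ 3)) - \<mu>^2) / \<mu>^2"
    by (intro divide_right_mono diff_right_mono S2) simp
  also have "\<dots> = ((G True / real m)^3 - 1) / real P"
  proof -
    have gen: "P' > 0 \<Longrightarrow> m' > 0 \<Longrightarrow> r' > (0::real) \<Longrightarrow>
      (P'*m'^3*(r'^6*((P'-1)*m'^3+G'^3)) - (P'*m'^3*r'^3)^2)/(P'*m'^3*r'^3)^2 = ((G'/m')^3-1)/P'" for P' m' r' G'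
      apply (simp add: divide_simps)
      apply (simp add: algebra_simps eval_nat_numeral)
      done
    show ?thesis unfolding mu using rpos m1 K1 KP by (intro gen) auto
  qed
  also have "\<dots> \<le> ((1 + real P / (real K * real m))^3 - 1) / real P"
  proof -
    have "G True / real m \<le> 1 + real P / (real K * real m)"
      using m1 K1 KP unfolding G_def r_def by (simp add: field_simps)
    moreover have "0 \<le> G True / real m" using m1 K1 KP unfolding G_def r_def by simp
    ultimately show ?thesis by (intro divide_right_mono diff_right_mono power_mono) auto
  qed
  finally show ?thesis unfolding M_def m_def .
qed



lemma rho_3: "rho K P 3 = rho K P 2 * ((real K - 2) / (real P - 2))"
  using rho_Suc[of K P 2] by (simp add: eval_nat_numeral)
lemma rho_4: "rho K P 4 = rho K P 3 * ((real K - 3) / (real P - 3))"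
  using rho_Suc[of K P 3] by (simp add: eval_nat_numeral)

lemma rho2_pos: "2 \<le> K \<Longrightarrow> K \<le> P \<Longrightarrow> rho K P 2 > 0"
  by (simp add: rho_2)

lemma rho_card_bound:
  assumes K2: "2 \<le> K" and KP: "K \<le> P" and P3: "3 \<le> P"
    and d: "x1 \<noteq> x2" "y1 \<noteq> y2" "x1 \<noteq> y2" "x2 \<noteq> y1"
  shows "rho K P (card ({x1,x2} \<union> {y1,y2})) \<le>
     rho K P 2 ^ 2 * ((if x1 = y1 then 2 * real P / real K else 1) * (if x2 = y2 then 2 * real P / real K else 1))"
proof -
  define r where "r = rho K P 2"
  define u where "u = 2 * real P / real K"
  have r0: "r > 0" using rho2_pos[OF K2 KP] by (simp add: r_def)
  have r_eq: "r = real K / real P * ((real K - 1) / (real P - 1))" by (simp add: r_def rho_2)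
  have I2: "r \<le> r^2 * u^2"
  proof -
    have "4 * real P * (real K - 1) \<ge> real K * (real P - 1)"
    proof -
      have "real K * real P \<ge> 2 * real P" using K2 by (intro mult_right_mono) auto
      then have "4 * real P * (real K - 1) \<ge> 2 * real P * real K" by (simp add: algebra_simps)
      moreover have "2 * real P * real K \<ge> real K * (real P - 1)" using K2 P3 by (simp add: algebra_simps)
      ultimately show ?thesis by linarith
    qed
    then have "1 \<le> r * u^2" unfolding r_eq u_def using K2 P3
      by (simp add: divide_simps power2_eq_square) (simp add: algebra_simps)
    then have "r * 1 \<le> r * (r * u^2)" using r0 by (intro mult_left_mono) auto
    then show ?thesis by (simp add: power2_eq_square algebra_simps)
  qed
  have I3: "rho K P 3 \<le> r^2 * u"
  proof -
    have "(real K - 2) * (real P - 1) \<le> 2 * (real K - 1) * (real P - 2)"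
    proof -
      have "real K * (real P - 3) + 2 \<ge> 0" using P3 by simp
      then show ?thesis by (simp add: algebra_simps)
    qed
    then have "(real K - 2) / (real P - 2) \<le> r * u" unfolding r_eq u_def using K2 P3
      by (simp add: divide_simps) (simp add: algebra_simps)
    then have "r * ((real K - 2) / (real P - 2)) \<le> r * (r * u)" using r0 by (intro mult_left_mono) auto
    then show ?thesis unfolding rho_3 r_def[symmetric] by (simp add: power2_eq_square algebra_simps)
  qed
  have I4: "rho K P 4 \<le> r^2"
  proof -
    have "(real K - 2) / (real P - 2) * ((real K - 3) / (real P - 3)) \<le> r"
    proof (cases "K \<le> 3 \<or> P = 3")
      case True
      then have "K = 2 \<or> K = 3 \<or> P = 3" using K2 by auto
      then show ?thesis using r0 by auto
    next
      case False
      then have K4: "4 \<le> K" and P4: "4 \<le> P" using KP by auto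
      have a: "(real K - 2) / (real P - 2) \<le> real K / real P"
        using K4 P4 KP by (simp add: divide_simps) (simp add: algebra_simps)
      have b: "(real K - 3) / (real P - 3) \<le> (real K - 1) / (real P - 1)"
        using K4 P4 KP by (simp add: divide_simps) (simp add: algebra_simps)
      show ?thesis unfolding r_eq
        by (rule mult_mono[OF a b]) (use K4 P4 in auto)
    qed
    then have "r * ((real K - 2) / (real P - 2) * ((real K - 3) / (real P - 3))) \<le> r * r"
      using r0 by (intro mult_left_mono) auto
    then show ?thesis unfolding rho_4 rho_3 r_def[symmetric] by (simp add: power2_eq_square algebra_simps)
  qed
  show ?thesis
  proof (cases "x1 = y1"; cases "x2 = y2")
    assume "x1 = y1" "x2 = y2"
    then have "card ({x1,x2} \<union> {y1,y2}) = 2" using d by auto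
    then show ?thesis using I2 \<open>x1 = y1\<close> \<open>x2 = y2\<close> by (simp add: r_def u_def power2_eq_square)
  next
    assume "x1 = y1" "x2 \<noteq> y2"
    then have "{x1,x2} \<union> {y1,y2} = {x1,x2,y2}" by auto
    then have "card ({x1,x2} \<union> {y1,y2}) = 3" using d \<open>x2 \<noteq> y2\<close> by auto
    then show ?thesis using I3 \<open>x1 = y1\<close> \<open>x2 \<noteq> y2\<close> by (simp add: r_def u_def)
  next
    assume "x1 \<noteq> y1" "x2 = y2"
    then have "{x1,x2} \<union> {y1,y2} = {x1,x2,y1}" by auto
    then have "card ({x1,x2} \<union> {y1,y2}) = 3" using d \<open>x1 \<noteq> y1\<close> by auto
    then show ?thesis using I3 \<open>x1 \<noteq> y1\<close> \<open>x2 = y2\<close> by (simp add: r_def u_def)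
  next
    assume "x1 \<noteq> y1" "x2 \<noteq> y2"
    then have "card ({x1,x2} \<union> {y1,y2}) = 4" using d by auto
    then show ?thesis using I4 \<open>x1 \<noteq> y1\<close> \<open>x2 \<noteq> y2\<close> by (simp add: r_def)
  qed
qed

lemma alg_b:
  fixes p m u :: real and \<psi> :: "real \<Rightarrow> real \<Rightarrow> real \<Rightarrow> real"
  assumes p0: "0 \<le> p" and p1: "p \<le> 1" and m1: "1 \<le> m" and u1: "1 \<le> u"
    and psi: "\<And>x y z. \<psi> x y z = (1 + (y*z-1)/m)*(1+(z*x-1)/m)*(1+(x*y-1)/m)"
  shows "p*(p*(p*\<psi> u u u + (1-p)*\<psi> u u 1) + (1-p)*(p*\<psi> u 1 u + (1-p)*\<psi> u 1 1))
       + (1-p)*(p*(p*\<psi> 1 u u + (1-p)*\<psi> 1 u 1) + (1-p)*(p*\<psi> 1 1 u + (1-p)*\<psi> 1 1 1))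
     - 1 \<le> 12*(p*u/m) + 12*(p*u^2/m) + 6*(p*u/m)*(p*u^2/m) + 6*(p*u^2/m)^2 + (p*u^2/m)^3"
proof -
  define d1 where "d1 = (u-1)/m"
  define d2 where "d2 = (u*u-1)/m"
  have d1: "0 \<le> d1" "d1 \<le> u/m" using m1 u1 by (auto simp: d1_def divide_simps)
  have uu: "1 \<le> u*u" using u1 mult_mono[of 1 u 1 u] by simp
  have d2: "0 \<le> d2" "d2 \<le> u^2/m" using m1 uu by (auto simp: d2_def divide_simps power2_eq_square)
  have eq: "p*(p*(p*\<psi> u u u + (1-p)*\<psi> u u 1) + (1-p)*(p*\<psi> u 1 u + (1-p)*\<psi> u 1 1))
       + (1-p)*(p*(p*\<psi> 1 u u + (1-p)*\<psi> 1 u 1) + (1-p)*(p*\<psi> 1 1 u + (1-p)*\<psi> 1 1 1))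
     - 1 = 3*p*(1-p)^2*(2*d1 + d1^2) + 3*p^2*(1-p)*((1+d1)^2*(1+d2) - 1) + p^3*((1+d2)^3-1)"
  proof -
    have e: "(u*1-1)/m = d1" "(1*u-1)/m = d1" "(u*u-1)/m = d2" "(1*1-1)/m = 0" by (simp_all add: d1_def d2_def)
    show ?thesis unfolding psi by (simp only: e) (simp add: algebra_simps power2_eq_square power3_eq_cube)
  qed
  define X1 where "X1 = p*u/m"
  define X2 where "X2 = p*u^2/m"
  have X1: "0 \<le> X1" "p*d1 \<le> X1" using p0 d1 m1 u1 mult_left_mono[OF d1(2) p0] by (auto simp: X1_def)
  have X2: "0 \<le> X2" "p*d2 \<le> X2" using p0 d2 m1 u1 mult_left_mono[OF d2(2) p0] by (auto simp: X2_def)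
  have pd1: "p * d1^2 \<le> X2"
  proof -
    have "d1^2 \<le> (u/m)^2" using d1 by (intro power_mono) auto
    also have "\<dots> \<le> u^2/m" using m1 u1 by (simp add: power_divide divide_simps power2_eq_square)
    finally have "p * d1^2 \<le> p * (u^2/m)" by (rule mult_left_mono[OF _ p0])
    then show ?thesis unfolding X2_def by simp
  qed
  have t1: "3*p*(1-p)^2*(2*d1 + d1^2) \<le> 6*X1 + 3*X2"
  proof -
    have "3*p*(1-p)^2*(2*d1 + d1^2) \<le> 3*p*(2*d1 + d1^2)"
    proof -
      have "(1-p)^2 \<le> 1" using p0 p1 by (intro power_le_one) auto
      then have "p * (1-p)^2 \<le> p * 1" by (rule mult_left_mono[OF _ p0])
      then show ?thesis using d1 by (intro mult_right_mono) auto
    qed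
    also have "\<dots> = 6*(p*d1) + 3*(p*d1^2)" by (simp add: algebra_simps)
    finally show ?thesis using X1 pd1 by linarith
  qed
  have t2: "3*p^2*(1-p)*((1+d1)^2*(1+d2) - 1) \<le> 6*X1 + 6*X2 + 6*X1*X2 + 3*X2^2"
  proof -
    have nn: "0 \<le> (1+d1)^2*(1+d2) - 1"
    proof -
      have "1 \<le> (1+d1)^2" using d1 by (simp add: one_le_power)
      moreover have "1 \<le> 1+d2" using d2 by simp
      ultimately have "1 * 1 \<le> (1+d1)^2*(1+d2)" by (intro mult_mono) auto
      then show ?thesis by simp
    qed
    have "3*p^2*(1-p)*((1+d1)^2*(1+d2) - 1) \<le> 3*p^2*((1+d1)^2*(1+d2) - 1)"
    proof -
      have "p^2 * (1-p) \<le> p^2 * 1" using p0 p1 by (intro mult_left_mono) auto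
      then show ?thesis using nn by (intro mult_right_mono) auto
    qed
    also have "\<dots> = 3*p^2*(2*d1 + d1^2) + 3*(p*d2)*(p*(1+d1)^2)" by (simp add: algebra_simps power2_eq_square)
    also have "3*p^2*(2*d1 + d1^2) \<le> 3*p*(2*d1 + d1^2)"
      using p0 p1 d1 by (intro mult_right_mono) (auto simp: power2_eq_square mult_left_le_one_le)
    also have "p*(1+d1)^2 = p + 2*(p*d1) + p*d1^2" by (simp add: algebra_simps power2_eq_square)
    also have "\<dots> \<le> 1 + 2*X1 + X2" using p1 X1 pd1 by linarith
    finally have "3*p^2*(1-p)*((1+d1)^2*(1+d2) - 1) \<le> 3 * p * (2 * d1 + d1\<^sup>2) + 3 * (p * d2) * (1 + 2 * X1 + X2)"
      using X2 p0 d2 by (simp add: mult_left_mono)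
    also have "\<dots> \<le> 3 * p * (2 * d1 + d1\<^sup>2) + 3 * X2 * (1 + 2 * X1 + X2)"
      using X1 X2 by (intro add_left_mono mult_right_mono mult_left_mono) auto
    also have "3 * p * (2 * d1 + d1\<^sup>2) = 6*(p*d1) + 3*(p*d1^2)" by (simp add: algebra_simps)
    finally show ?thesis using X1 pd1 by (simp add: algebra_simps power2_eq_square)
  qed
  have t3: "p^3*((1+d2)^3-1) \<le> 3*X2 + 3*X2^2 + X2^3"
  proof -
    have "p^3*((1+d2)^3-1) = 3*(p^2)*(p*d2) + 3*p*(p*d2)^2 + (p*d2)^3" by (simp add: algebra_simps power3_eq_cube power2_eq_square)
    also have "\<dots> \<le> 3*1*X2 + 3*1*X2^2 + X2^3"
      using p0 p1 X2 d2
      by (intro add_mono mult_mono power_mono) (auto simp: power_le_one mult_nonneg_nonneg)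
    finally show ?thesis by simp
  qed
  have "3*p*(1-p)^2*(2*d1 + d1^2) + 3*p^2*(1-p)*((1+d1)^2*(1+d2) - 1) + p^3*((1+d2)^3-1)
     \<le> 12*X1 + 12*X2 + 6*X1*X2 + 6*X2^2 + X2^3" using t1 t2 t3 by linarith
  then show ?thesis unfolding eq X1_def X2_def .
qed



lemma avg_if:
  assumes "a < Q" and pdef: "p = 1 / real Q"
  shows "(\<Sum>a'<Q. F (if a = a' then u else 1)) = real Q * (p * F u + (1 - p) * (F 1 :: real))"
proof -
  have "(\<Sum>a'<Q. F (if a = a' then u else 1)) = (\<Sum>a'<Q. if a = a' then F u else F 1)"
    by (rule sum.cong) auto
  also have "\<dots> = F u + (real Q - 1) * F 1" using sum_if_eq[of "{..<Q}" a "F u" "F 1"] assms by simp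
  also have "\<dots> = real Q * ((1/real Q) * F u + (1 - 1/real Q) * F 1)"
    using assms by (simp add: algebra_simps)
  finally show ?thesis using pdef by simp
qed

lemma bv_two:
  assumes K2: "2 \<le> K" and KP: "K \<le> P" and P3: "3 \<le> P"
    and d: "x1 \<noteq> x2" "y1 \<noteq> y2" "x1 \<noteq> y2" "x2 \<noteq> y1"
  shows "bv K P i i' {x1,x2} {y1,y2} \<le> rho K P 2 ^ 2 *
     (if i = i' then (if x1 = y1 then 2 * real P / real K else 1) * (if x2 = y2 then 2 * real P / real K else 1) else 1)"
proof (cases "i = i'")
  case True then show ?thesis using rho_card_bound[OF assms] by (simp add: bv_def)
next
  case False then show ?thesis using d by (simp add: bv_def power2_eq_square numeral_2_eq_2)
qed

lemma bv_nonneg: "K \<le> P \<Longrightarrow> bv K P i i' S S' \<ge> 0"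
  using rho_nonneg by (auto simp: bv_def)

lemma design_b:
  assumes n3: "3 \<le> n" and K2: "2 \<le> K" and KP: "K \<le> P" and P3: "3 \<le> P"
  defines "X1 \<equiv> (1 / real (P div 3)) * (2 * real P / real K) / real (n div 3)"
      and "X2 \<equiv> (1 / real (P div 3)) * (2 * real P / real K)^2 / real (n div 3)"
  shows "measure_pmf.prob (rkg_pmf n K P) {f. \<not> triangles n f > 0} \<le>
           12*X1 + 12*X2 + 6*X1*X2 + 6*X2^2 + X2^3"
proof -
  define m where "m = n div 3"
  define Q where "Q = P div 3"
  have m1: "1 \<le> m" and mn: "3*m \<le> n" using n3 by (auto simp: m_def)
  have Q1: "1 \<le> Q" and QP: "3*Q \<le> P" using P3 by (auto simp: Q_def)
  define ka where "ka = (\<lambda>a::nat. Suc a)"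
  define kb where "kb = (\<lambda>b::nat. Q + Suc b)"
  define kc where "kc = (\<lambda>c::nat. 2*Q + Suc c)"
  define A where "A = {..<Q} \<times> ({..<Q} \<times> ({..<Q} \<times> ({..<m} \<times> ({..<m} \<times> {..<m}))))"
  define E where "E = (\<lambda>\<alpha>::nat\<times>nat\<times>nat\<times>nat\<times>nat\<times>nat. case \<alpha> of (a,b,c,i,j,l) \<Rightarrow>
       ev n (R3 m i j l {kb b, kc c} {kc c, ka a} {ka a, kb b}))"
  define r where "r = rho K P 2"
  define u where "u = 2 * real P / real K"
  define h where "h = (\<lambda>a a'::nat. if a = a' then u else 1)"
  define p where "p = 1 / real Q"
  have rpos: "r > 0" using rho2_pos[OF K2 KP] by (simp add: r_def)
  have u1: "1 \<le> u" using K2 KP by (simp add: u_def field_simps)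
  define M where "M = rkg_pmf n K P"
  have keys: "ka a \<in> {1..P}" "kb b \<in> {1..P}" "kc c \<in> {1..P}" if "a < Q" "b < Q" "c < Q" for a b c
    using that QP by (auto simp: ka_def kb_def kc_def)
  have kdist: "ka a \<noteq> kb b'" "kb b \<noteq> kc c'" "kc c \<noteq> ka a'" "kb b' \<noteq> ka a" "kc c' \<noteq> kb b" "ka a' \<noteq> kc c"
    if "a < Q" "b < Q" "c < Q" "a' < Q" "b' < Q" "c' < Q" for a b c a' b' c'
    using that by (auto simp: ka_def kb_def kc_def)
  have kd: "ka x \<noteq> kb y \<and> kb x \<noteq> kc y \<and> kc x \<noteq> ka y \<and> kb y \<noteq> ka x \<and> kc y \<noteq> kb x \<and> ka y \<noteq> kc x" if "x < Q" "y < Q" for x y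
    using that by (auto simp: ka_def kb_def kc_def)
  have kinj: "ka a = ka a' \<longleftrightarrow> a = a'" "kb b = kb b' \<longleftrightarrow> b = b'" "kc c = kc c' \<longleftrightarrow> c = c'" for a b c a' b' c'
    by (auto simp: ka_def kb_def kc_def)
  have pairprob: "measure_pmf.prob M (E (a,b,c,i,j,l) \<inter> E (a',b',c',i',j',l')) =
       bv K P i i' {kb b, kc c} {kb b', kc c'} * bv K P j j' {kc c, ka a} {kc c', ka a'} *
       bv K P l l' {ka a, kb b} {ka a', kb b'}"
    if "(a,b,c,i,j,l) \<in> A" "(a',b',c',i',j',l') \<in> A" for a b c i j l a' b' c' i' j' l'
    unfolding M_def E_def prod.case
    apply (rule prob_pair[OF mn _ _ _ _ _ _ _ _ _ _ _ _ KP])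
    using that keys unfolding A_def by auto
  have pairbound: "measure_pmf.prob M (E (a,b,c,i,j,l) \<inter> E (a',b',c',i',j',l')) \<le>
       r^6 * ((if i = i' then h b b' * h c c' else 1) * (if j = j' then h c c' * h a a' else 1) *
              (if l = l' then h a a' * h b b' else 1))"
    if A: "(a,b,c,i,j,l) \<in> A" "(a',b',c',i',j',l') \<in> A" for a b c i j l a' b' c' i' j' l'
  proof -
    have idx: "a < Q" "b < Q" "c < Q" "a' < Q" "b' < Q" "c' < Q" using A by (auto simp: A_def)
    have b1: "bv K P i i' {kb b, kc c} {kb b', kc c'} \<le> r^2 * (if i = i' then h b b' * h c c' else 1)"
    proof -
      have e1: "(if kb b = kb b' then 2 * real P / real K else 1) = h b b'"
          "(if kc c = kc c' then 2 * real P / real K else 1) = h c c'"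
        by (simp_all add: h_def u_def kinj)
      have "bv K P i i' {kb b, kc c} {kb b', kc c'} \<le> rho K P 2 ^ 2 * (if i = i' then
          (if kb b = kb b' then 2 * real P / real K else 1) * (if kc c = kc c' then 2 * real P / real K else 1) else 1)"
        by (rule bv_two[OF K2 KP P3]) (use kd[OF idx(2) idx(3)] kd[OF idx(5) idx(6)] kd[OF idx(2) idx(6)] kd[OF idx(5) idx(3)] in auto)
      then show ?thesis unfolding e1 r_def .
    qed
    have b2: "bv K P j j' {kc c, ka a} {kc c', ka a'} \<le> r^2 * (if j = j' then h c c' * h a a' else 1)"
    proof -
      have e1: "(if kc c = kc c' then 2 * real P / real K else 1) = h c c'"
          "(if ka a = ka a' then 2 * real P / real K else 1) = h a a'"
        by (simp_all add: h_def u_def kinj)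
      have "bv K P j j' {kc c, ka a} {kc c', ka a'} \<le> rho K P 2 ^ 2 * (if j = j' then
          (if kc c = kc c' then 2 * real P / real K else 1) * (if ka a = ka a' then 2 * real P / real K else 1) else 1)"
        by (rule bv_two[OF K2 KP P3]) (use kd[OF idx(3) idx(1)] kd[OF idx(6) idx(4)] kd[OF idx(3) idx(4)] kd[OF idx(6) idx(1)] in auto)
      then show ?thesis unfolding e1 r_def .
    qed
    have b3: "bv K P l l' {ka a, kb b} {ka a', kb b'} \<le> r^2 * (if l = l' then h a a' * h b b' else 1)"
    proof -
      have e1: "(if ka a = ka a' then 2 * real P / real K else 1) = h a a'"
          "(if kb b = kb b' then 2 * real P / real K else 1) = h b b'"
        by (simp_all add: h_def u_def kinj)
      have "bv K P l l' {ka a, kb b} {ka a', kb b'} \<le> rho K P 2 ^ 2 * (if l = l' then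
          (if ka a = ka a' then 2 * real P / real K else 1) * (if kb b = kb b' then 2 * real P / real K else 1) else 1)"
        by (rule bv_two[OF K2 KP P3]) (use kd[OF idx(1) idx(2)] kd[OF idx(4) idx(5)] kd[OF idx(1) idx(5)] kd[OF idx(4) idx(2)] in auto)
      then show ?thesis unfolding e1 r_def .
    qed
    have "measure_pmf.prob M (E (a,b,c,i,j,l) \<inter> E (a',b',c',i',j',l')) \<le>
        r^2 * (if i = i' then h b b' * h c c' else 1) * (r^2 * (if j = j' then h c c' * h a a' else 1)) *
        (r^2 * (if l = l' then h a a' * h b b' else 1))"
      unfolding pairprob[OF A] using u1 by (intro mult_mono b1 b2 b3 bv_nonneg[OF KP] mult_nonneg_nonneg) (auto simp: h_def)
    also have "\<dots> = r^6 * ((if i = i' then h b b' * h c c' else 1) * (if j = j' then h c c' * h a a' else 1) *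
              (if l = l' then h a a' * h b b' else 1))"
      by (simp add: eval_nat_numeral algebra_simps)
    finally show ?thesis .
  qed
  have single: "measure_pmf.prob M (E \<alpha>) = r^3" if "\<alpha> \<in> A" for \<alpha>
  proof -
    obtain a b c i j l where al: "\<alpha> = (a,b,c,i,j,l)" by (cases \<alpha>) auto
    have idx: "a < Q" "b < Q" "c < Q" using that by (auto simp: al A_def)
    have c2: "card {kb b, kc c} = 2" "card {kc c, ka a} = 2" "card {ka a, kb b} = 2"
      using kdist[OF idx idx] by auto
    show ?thesis using pairprob[OF that[unfolded al] that[unfolded al]] c2
      by (simp add: al bv_def r_def power3_eq_cube)
  qed
  define \<mu> where "\<mu> = (\<Sum>\<alpha>\<in>A. measure_pmf.prob M (E \<alpha>))"
  have cardA: "card A = Q^3 * m^3" by (simp add: A_def card_cartesian_product power3_eq_cube)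
  have mu: "\<mu> = real Q^3 * real m^3 * r^3"
    unfolding \<mu>_def by (simp add: single cardA)
  have mupos: "\<mu> > 0" using mu m1 Q1 rpos by simp
  define \<psi> where "\<psi> = (\<lambda>x y z. (1 + (y*z-1)/real m)*(1+(z*x-1)/real m)*(1+(x*y-1)/real m))"
  define Ex where "Ex = p*(p*(p*\<psi> u u u + (1-p)*\<psi> u u 1) + (1-p)*(p*\<psi> u 1 u + (1-p)*\<psi> u 1 1))
       + (1-p)*(p*(p*\<psi> 1 u u + (1-p)*\<psi> 1 u 1) + (1-p)*(p*\<psi> 1 1 u + (1-p)*\<psi> 1 1 1))"
  have inner: "(\<Sum>\<beta>\<in>A. measure_pmf.prob M (E \<alpha> \<inter> E \<beta>)) \<le> r^6 * (real m^3 * (real Q^3 * Ex))"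
    if al: "\<alpha> \<in> A" for \<alpha>
  proof -
    obtain a b c i j l where al': "\<alpha> = (a,b,c,i,j,l)" by (cases \<alpha>) auto
    have idx: "a < Q" "b < Q" "c < Q" "i < m" "j < m" "l < m" using al by (auto simp: al' A_def)
    let ?Ms = "{..<m} \<times> ({..<m} \<times> {..<m})"
    have "(\<Sum>\<beta>\<in>A. measure_pmf.prob M (E \<alpha> \<inter> E \<beta>)) =
        (\<Sum>a'<Q. \<Sum>b'<Q. \<Sum>c'<Q. \<Sum>z\<in>?Ms. measure_pmf.prob M (E \<alpha> \<inter> E (a',b',c',z)))"
      unfolding A_def by (simp add: sum.cartesian_product')
    also have "\<dots> \<le> (\<Sum>a'<Q. \<Sum>b'<Q. \<Sum>c'<Q. \<Sum>z\<in>?Ms.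
         r^6 * ((if i = fst z then h b b' * h c c' else 1) * (if j = fst (snd z) then h c c' * h a a' else 1) *
              (if l = snd (snd z) then h a a' * h b b' else 1)))"
      apply (intro sum_mono)
      subgoal for a' b' c' z
        using pairbound[of a b c i j l a' b' c' "fst z" "fst (snd z)" "snd (snd z)"] al
        by (cases z) (auto simp: al' A_def)
      done
    also have "\<dots> = r^6 * (\<Sum>a'<Q. \<Sum>b'<Q. \<Sum>c'<Q.
         (real m - 1 + h b b' * h c c') * (real m - 1 + h c c' * h a a') * (real m - 1 + h a a' * h b b'))"
    proof -
      have c: "(\<Sum>z\<in>?Ms. (if i = fst z then c1 else 1) *
          (if j = fst (snd z) then c2 else 1) * (if l = snd (snd z) then c3 else 1)) =
          (real m - 1 + c1) * (real m - 1 + c2) * (real m - 1 + c3)" for c1 c2 c3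
        using sum_sep3[of "\<lambda>i'. if i = i' then c1 else 1" "\<lambda>j'. if j = j' then c2 else 1" "\<lambda>l'. if l = l' then c3 else 1"
            "{..<m}" "{..<m}" "{..<m}"]
          sum_if_eq[of "{..<m}" i c1 1] sum_if_eq[of "{..<m}" j c2 1] sum_if_eq[of "{..<m}" l c3 1] idx
        by (simp add: algebra_simps)
      show ?thesis unfolding sum_distrib_left[symmetric] c by simp
    qed
    also have "\<dots> = r^6 * (real m^3 * (\<Sum>a'<Q. \<Sum>b'<Q. \<Sum>c'<Q. \<psi> (h a a') (h b b') (h c c')))"
    proof -
      have "(real m - 1 + y*z) * (real m - 1 + z*x) * (real m - 1 + x*y) = real m^3 * \<psi> x y z" for x y z
        unfolding \<psi>_def using m1 by (simp add: field_simps power3_eq_cube)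
      then show ?thesis by (simp add: sum_distrib_left)
    qed
    also have "(\<Sum>a'<Q. \<Sum>b'<Q. \<Sum>c'<Q. \<psi> (h a a') (h b b') (h c c')) = real Q^3 * Ex"
    proof -
      have s3: "(\<Sum>c'<Q. \<psi> x y (h c c')) = real Q * (p * \<psi> x y u + (1-p) * \<psi> x y 1)" for x y
        unfolding h_def by (rule avg_if[OF idx(3) p_def])
      have s2: "(\<Sum>b'<Q. \<Sum>c'<Q. \<psi> x (h b b') (h c c')) =
          real Q * (p * (real Q * (p * \<psi> x u u + (1-p) * \<psi> x u 1)) + (1-p) * (real Q * (p * \<psi> x 1 u + (1-p) * \<psi> x 1 1)))" for x
        unfolding s3 unfolding h_def by (rule avg_if[OF idx(2) p_def])
      have s1: "(\<Sum>a'<Q. \<Sum>b'<Q. \<Sum>c'<Q. \<psi> (h a a') (h b b') (h c c')) =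
          real Q * (p * (real Q * (p * (real Q * (p * \<psi> u u u + (1-p) * \<psi> u u 1)) + (1-p) * (real Q * (p * \<psi> u 1 u + (1-p) * \<psi> u 1 1))))
            + (1-p) * (real Q * (p * (real Q * (p * \<psi> 1 u u + (1-p) * \<psi> 1 u 1)) + (1-p) * (real Q * (p * \<psi> 1 1 u + (1-p) * \<psi> 1 1 1)))))"
        unfolding s2 unfolding h_def by (rule avg_if[OF idx(1) p_def])
      show ?thesis unfolding s1 Ex_def by (simp add: power3_eq_cube algebra_simps)
    qed
    finally show ?thesis .
  qed
  have S2: "(\<Sum>\<alpha>\<in>A. \<Sum>\<beta>\<in>A. measure_pmf.prob M (E \<alpha> \<inter> E \<beta>)) \<le>
      real Q^3 * real m^3 * (r^6 * (real m^3 * (real Q^3 * Ex)))"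
  proof -
    have "(\<Sum>\<alpha>\<in>A. \<Sum>\<beta>\<in>A. measure_pmf.prob M (E \<alpha> \<inter> E \<beta>)) \<le>
        (\<Sum>\<alpha>\<in>A. r^6 * (real m^3 * (real Q^3 * Ex)))"
      by (rule sum_mono) (rule inner)
    then show ?thesis by (simp add: cardA)
  qed
  have sub: "{f. \<not> triangles n f > 0} \<subseteq> {f. \<forall>\<alpha>\<in>A. f \<notin> E \<alpha>}"
  proof
    fix f assume f: "f \<in> {f. \<not> triangles n f > 0}"
    show "f \<in> {f. \<forall>\<alpha>\<in>A. f \<notin> E \<alpha>}"
    proof (clarify)
      fix \<alpha> assume a: "\<alpha> \<in> A" "f \<in> E \<alpha>"
      obtain a b c i j l where al: "\<alpha> = (a,b,c,i,j,l)" by (cases \<alpha>) auto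
      have "triangles n f > 0"
        using a unfolding al A_def E_def
        by (intro ev_R3_tri[OF mn, of i j l "{kb b, kc c}" "{kc c, ka a}" "{ka a, kb b}"]) auto
      then show False using f by simp
    qed
  qed
  have "measure_pmf.prob M {f. \<not> triangles n f > 0} \<le> measure_pmf.prob M {f. \<forall>\<alpha>\<in>A. f \<notin> E \<alpha>}"
    by (rule measure_pmf.finite_measure_mono[OF sub]) simp
  also have "\<dots> \<le> ((\<Sum>\<alpha>\<in>A. \<Sum>\<beta>\<in>A. measure_pmf.prob M (E \<alpha> \<inter> E \<beta>)) - \<mu>^2) / \<mu>^2"
    by (rule second_moment[OF _ \<mu>_def mupos]) (simp add: A_def)
  also have "\<dots> \<le> (real Q^3 * real m^3 * (r^6 * (real m^3 * (real Q^3 * Ex))) - \<mu>^2) / \<mu>^2"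
    by (intro divide_right_mono diff_right_mono S2) simp
  also have "\<dots> = Ex - 1"
  proof -
    have gen: "Q' > 0 \<Longrightarrow> m' > 0 \<Longrightarrow> r' > (0::real) \<Longrightarrow>
      (Q'^3*m'^3*(r'^6*(m'^3*(Q'^3*E'))) - (Q'^3*m'^3*r'^3)^2)/(Q'^3*m'^3*r'^3)^2 = E' - 1" for Q' m' r' E'
      by (simp add: divide_simps) (simp add: algebra_simps eval_nat_numeral)
    show ?thesis unfolding mu using rpos m1 Q1 by (intro gen) auto
  qed
  also have "\<dots> \<le> 12*(p*u/real m) + 12*(p*u^2/real m) + 6*(p*u/real m)*(p*u^2/real m) + 6*(p*u^2/real m)^2 + (p*u^2/real m)^3"
    unfolding Ex_def
    by (rule alg_b) (use Q1 m1 u1 in \<open>auto simp: p_def \<psi>_def\<close>)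
  finally show ?thesis unfolding M_def X1_def X2_def p_def u_def m_def Q_def by simp
qed



lemma q_lower:
  assumes K1: "1 \<le> K" and KP: "K \<le> P"
  shows "1 - q_rkg K P \<le> real K^2 / real P"
proof (cases "2*K \<le> P")
  case False
  then have q0: "q_rkg K P = 0" by (simp add: q_rkg_def)
  have "real P \<le> real K^2"
  proof (cases "K = 1")
    case True then show ?thesis using False by simp
  next
    case False
    then have "2 * K \<le> K * K" using K1 by (intro mult_right_mono) auto
    then have "P \<le> K * K" using \<open>\<not> 2*K \<le> P\<close> by linarith
    then have "P \<le> K^2" by (simp add: power2_eq_square)
    then show ?thesis by (metis of_nat_le_iff of_nat_power)
  qed
  then show ?thesis using q0 K1 KP by (simp add: divide_simps)
next
  case True
  define KR where "KR = key_rings K P"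
  define A0 where "A0 = {1..K}"
  have fKR: "finite KR" by (simp add: KR_def key_rings_finite)
  have avoid: "card {S \<in> KR. S \<inter> A0 = {}} = (P - K) choose K"
  proof -
    have "{S \<in> KR. S \<inter> A0 = {}} = {S. S \<subseteq> {1..P} - A0 \<and> card S = K}"
      by (auto simp: KR_def key_rings_def A0_def)
    moreover have "card ({1..P} - A0) = P - K" using KP by (simp add: A0_def card_Diff_subset)
    ultimately show ?thesis using n_subsets[of "{1..P} - A0" K] by simp
  qed
  have meet: "card {S \<in> KR. S \<inter> A0 \<noteq> {}} \<le> K * ((P - 1) choose (K - 1))"
  proof -
    have "{S \<in> KR. S \<inter> A0 \<noteq> {}} = (\<Union>a\<in>A0. {S \<in> KR. {a} \<subseteq> S})" by auto
    then have "card {S \<in> KR. S \<inter> A0 \<noteq> {}} \<le> (\<Sum>a\<in>A0. card {S \<in> KR. {a} \<subseteq> S})"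
      by (simp add: card_UN_le A0_def)
    also have "\<dots> = (\<Sum>a\<in>A0. (P - 1) choose (K - 1))"
    proof (rule sum.cong[OF refl])
      fix a assume "a \<in> A0"
      then have "{a} \<subseteq> {1..P}" using KP by (auto simp: A0_def)
      then show "card {S \<in> KR. {a} \<subseteq> S} = (P - 1) choose (K - 1)"
        using card_contain[of "{a}" P K] K1 unfolding KR_def by simp
    qed
    also have "\<dots> = K * ((P - 1) choose (K - 1))" by (simp add: A0_def)
    finally show ?thesis .
  qed
  have split: "card KR = card {S \<in> KR. S \<inter> A0 = {}} + card {S \<in> KR. S \<inter> A0 \<noteq> {}}"
    using fKR by (subst card_Un_disjoint[symmetric]) (auto intro: arg_cong[where f=card])
  have absorb: "real P * real ((P - 1) choose (K - 1)) = real K * real (P choose K)"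
  proof -
    have "Suc (K-1) * (Suc (P-1) choose Suc (K-1)) = Suc (P-1) * ((P-1) choose (K-1))" by (rule Suc_times_binomial)
    then have "K * (P choose K) = P * ((P-1) choose (K-1))" using K1 KP by simp
    then show ?thesis by (metis of_nat_mult)
  qed
  have cKR: "card KR = P choose K" by (simp add: KR_def key_rings_card)
  have pos: "real (P choose K) > 0" using KP by simp
  have "real (P choose K) - real ((P - K) choose K) \<le> real K * real ((P - 1) choose (K - 1))"
    using split meet avoid cKR by (simp add: of_nat_mult[symmetric] del: of_nat_mult)
  also have "\<dots> = real K^2 / real P * real (P choose K)"
    using absorb K1 KP by (simp add: field_simps power2_eq_square)
  finally have "real (P choose K) - real ((P - K) choose K) \<le> real K^2 / real P * real (P choose K)" .
  then show ?thesis using True pos by (simp add: q_rkg_def divide_simps)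
qed


lemma cube_root_le: "(a::real)^3 \<le> b^3 \<Longrightarrow> 0 \<le> b \<Longrightarrow> a \<le> b"
  using power_le_imp_le_base[of a 2 b] by (simp add: eval_nat_numeral)

lemma Ba_small:
  fixes z P e :: real
  assumes e0: "0 < e" and e1: "e \<le> 1" and z0: "0 < z" and P1: "1 \<le> P" and Y: "1/e^3 \<le> z^3/P^2"
  shows "3/z + 3*P/z^2 + P^2/z^3 \<le> 7*e"
proof -
  have a: "P^2/z^3 \<le> e^3"
  proof -
    have P2: "0 < P^2" using P1 by simp
    have z3: "0 < z^3" using z0 by simp
    have e3p: "0 < e^3" using e0 by simp
    from Y have "1 \<le> e^3 * (z^3 / P^2)" using e3p by (simp add: divide_le_eq mult.commute)
    then have "P^2 \<le> e^3 * z^3" using P2 by (simp add: le_divide_eq mult.commute)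
    then show ?thesis using z3 by (simp add: divide_le_eq)
  qed
  have e3: "e^3 \<le> e" using e0 e1 by (simp add: power_le_one eval_nat_numeral mult_le_one mult_left_le_one_le)
  have b: "1/z \<le> e"
  proof (rule cube_root_le)
    have "(1/z)^3 = 1/z^3" by (simp add: power_divide)
    also have "\<dots> \<le> P^2/z^3" using z0 P1 by (simp add: divide_simps one_le_power)
    finally show "(1/z)^3 \<le> e^3" using a by linarith
  qed (use e0 in simp)
  have c: "P/z^2 \<le> e"
  proof -
    have "(P/z^2)^3 \<le> (e^2)^3"
    proof -
      have "(P/z^2)^3 = P^3/z^6" by (simp add: power_divide power_mult[symmetric])
      also have "\<dots> \<le> P^4/z^6" using z0 P1 by (intro divide_right_mono power_increasing) auto
      also have "\<dots> = (P^2/z^3)^2" by (simp add: power_divide power_mult[symmetric])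
      also have "\<dots> \<le> (e^3)^2" using a z0 by (intro power_mono) auto
      also have "\<dots> = (e^2)^3" by (simp add: power_mult[symmetric])
      finally show ?thesis .
    qed
    then have "P/z^2 \<le> e^2" by (rule cube_root_le) simp
    also have "e^2 \<le> e" using e0 e1 by (simp add: power2_eq_square mult_left_le_one_le)
    finally show ?thesis .
  qed
  have "3/z + 3*P/z^2 + P^2/z^3 = 3*(1/z) + 3*(P/z^2) + P^2/z^3" by simp
  also have "\<dots> \<le> 3*e + 3*e + e" using a b c e3 by linarith
  finally show ?thesis by simp
qed

lemma Ba_eq:
  fixes z P :: real
  assumes "0 < z" "0 < P"
  shows "((1 + P/z)^3 - 1)/P = 3/z + 3*P/z^2 + P^2/z^3"
  using assms by (simp add: field_simps power2_eq_square power3_eq_cube)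

lemma Bb_small:
  fixes X1 X2 e :: real
  assumes "0 \<le> X1" "X1 \<le> e" "0 \<le> X2" "X2 \<le> e" "e \<le> 1"
  shows "12*X1 + 12*X2 + 6*X1*X2 + 6*X2^2 + X2^3 \<le> 37*e"
proof -
  have h1: "X1*X2 \<le> 1*e" using assms by (intro mult_mono) auto
  have h2: "X2*X2 \<le> 1*e" using assms by (intro mult_mono) auto
  have h3: "X2*(X2*X2) \<le> 1*e" using assms h2 by (intro mult_mono) auto
  from h1 h2 h3 have "X1*X2 \<le> e" "X2^2 \<le> e" "X2^3 \<le> e" by (simp_all add: power2_eq_square power3_eq_cube)
  then show ?thesis using assms by linarith
qed

lemma div3_bound: "3 \<le> n \<Longrightarrow> real n \<le> 9 * real (n div 3) \<and> 1 \<le> n div 3"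
  by linarith

lemma pf_small:
  fixes k p nn :: nat and e :: real
  assumes n3: "3 \<le> nn" and K1: "1 \<le> k" and KP: "k \<le> p"
    and e0: "0 < e" and e1: "e \<le> 1"
    and H: "1458 * (36/e)^3 \<le> real nn^3 * tau_rkg k p"
    and nbig: "81/e \<le> real nn" and nbig2: "2 * (1458 * (36/e)^3) \<le> real nn"
  shows "measure_pmf.prob (rkg_pmf nn k p) {f. \<not> triangles nn f > 0} \<le> 37*e"
proof -
  define H where "H = 1458 * (36/e)^3"
  define m where "m = nn div 3"
  have mb: "real nn \<le> 9 * real m" "1 \<le> m" using div3_bound[OF n3] by (auto simp: m_def)
  define La where "La = real nn^3 * real k^3 / real p^2"
  define Lb where "Lb = real nn^3 * real k^6 / real p^3"
  have Hpos: "H > 0" using e0 by (simp add: H_def)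
  have He: "1/e^3 \<le> H/1458"
  proof -
    have "1/e^3 \<le> 36^3/e^3" using e0 by (simp add: divide_right_mono)
    then show ?thesis by (simp add: H_def power_divide)
  qed
  have Lsum: "La + Lb \<ge> H"
    using H unfolding H_def La_def Lb_def tau_rkg_def by (simp add: power_divide power_mult[symmetric] algebra_simps)
  have p1: "1 \<le> real p" using K1 KP by simp
  have k1: "1 \<le> real k" using K1 by simp
  have m3: "real nn^3 \<le> 729 * real m^3"
  proof -
    have "real nn^3 \<le> (9 * real m)^3" by (rule power_mono) (use mb in auto)
    then show ?thesis by (simp add: power_mult_distrib)
  qed
  show ?thesis
  proof (cases "La \<ge> H/2")
    case True
    define z where "z = real k * real m"
    have z0: "0 < z" using k1 mb by (simp add: z_def)
    have "La / 729 \<le> z^3 / real p^2"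
    proof -
      have "La / 729 = real k^3 * (real nn^3 / 729) / real p^2" by (simp add: La_def algebra_simps)
      also have "\<dots> \<le> real k^3 * real m^3 / real p^2"
        using m3 p1 by (intro divide_right_mono mult_left_mono) auto
      finally show ?thesis by (simp add: z_def power_mult_distrib)
    qed
    moreover have "H/1458 \<le> La/729" using True by simp
    ultimately have Y: "1/e^3 \<le> z^3/real p^2" using He by linarith
    have "measure_pmf.prob (rkg_pmf nn k p) {f. \<not> triangles nn f > 0} \<le>
           ((1 + real p / (real k * real (nn div 3)))^3 - 1) / real p"
      by (rule design_a[OF n3 K1 KP])
    also have "\<dots> = 3/z + 3*real p/z^2 + real p^2/z^3"
      unfolding m_def[symmetric] z_def[symmetric] using z0 p1 by (intro Ba_eq) auto
    also have "\<dots> \<le> 7*e" by (rule Ba_small[OF e0 e1 z0 p1 Y])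
    finally show ?thesis using e0 by simp
  next
    case False
    then have LbH: "Lb \<ge> H/2" using Lsum by simp
    have K2: "2 \<le> k"
    proof (rule ccontr)
      assume "\<not> 2 \<le> k"
      then have "k = 1" using K1 by simp
      have "real nn^3 / real p^3 \<le> real nn^3 / real p^2"
        using p1 by (intro divide_left_mono power_increasing) auto
      then have "Lb \<le> La" unfolding La_def Lb_def using \<open>k = 1\<close> by simp
      then show False using False LbH by simp
    qed
    have P3: "3 \<le> p"
    proof (rule ccontr)
      assume "\<not> 3 \<le> p"
      then have "real p \<le> 2" by simp
      then have "real p^2 \<le> 2^2" using p1 by (intro power_mono) auto
      then have "real p^2 \<le> 4" by simp
      have "La \<ge> real nn^3 / 4"
      proof -
        have "real nn^3 / 4 \<le> real nn^3 / real p^2"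
          using \<open>real p^2 \<le> 4\<close> p1 by (intro divide_left_mono) auto
        also have "\<dots> \<le> real nn^3 * real k^3 / real p^2"
        proof (rule divide_right_mono)
          have "1 \<le> real k^3" using k1 by (simp add: one_le_power)
          then have "real nn^3 * 1 \<le> real nn^3 * real k^3" by (intro mult_left_mono) auto
          then show "real nn^3 \<le> real nn^3 * real k^3" by simp
        qed simp
        finally show ?thesis by (simp add: La_def algebra_simps)
      qed
      moreover have "real nn^3 \<ge> 2 * H"
      proof -
        have "real nn * 1 \<le> real nn * real nn^2" using n3 by (intro mult_left_mono) (auto simp: one_le_power)
        then have nn3: "real nn \<le> real nn^3" by (simp add: power2_eq_square power3_eq_cube)
        show ?thesis using nbig2 nn3 unfolding H_def by linarith
      qed
      ultimately show False using False by simp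
    qed
    define Q where "Q = p div 3"
    have Qb: "real p \<le> 9 * real Q" "1 \<le> Q" using div3_bound[OF P3] by (auto simp: Q_def)
    define X1 where "X1 = (1 / real Q) * (2 * real p / real k) / real m"
    define X2 where "X2 = (1 / real Q) * (2 * real p / real k)^2 / real m"
    have iQ: "1 / real Q \<le> 9 / real p" using Qb p1 by (simp add: divide_simps)
    have X1: "0 \<le> X1" "X1 \<le> e"
    proof -
      show "0 \<le> X1" by (simp add: X1_def)
      have "X1 \<le> (9 / real p) * (2 * real p / real k) / real m"
        unfolding X1_def using iQ by (intro divide_right_mono mult_right_mono) auto
      also have "\<dots> = 18 / (real k * real m)" using p1 by (simp add: field_simps)
      also have "\<dots> \<le> 9 / real m" using K2 mb by (simp add: divide_simps)
      also have "\<dots> \<le> 81 / real nn" using mb n3 by (simp add: divide_simps)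
      also have "\<dots> \<le> e"
      proof -
        have "81 \<le> real nn * e" using nbig e0 by (simp add: pos_divide_le_eq)
        then show ?thesis using n3 by (simp add: pos_divide_le_eq mult.commute)
      qed
      finally show "X1 \<le> e" .
    qed
    define w where "w = real k^2 * real m / real p"
    have w0: "0 < w" using k1 mb p1 by (simp add: w_def)
    have w: "36/e \<le> w"
    proof (rule cube_root_le)
      have "Lb / 729 \<le> w^3"
      proof -
        have "Lb / 729 = real k^6 * (real nn^3 / 729) / real p^3" by (simp add: Lb_def algebra_simps)
        also have "\<dots> \<le> real k^6 * real m^3 / real p^3"
          using m3 p1 by (intro divide_right_mono mult_left_mono) auto
        finally show ?thesis by (simp add: w_def power_mult_distrib power_divide power_mult[symmetric])
      qed
      then show "(36/e)^3 \<le> w^3" using LbH H_def by simp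
    qed (use w0 in simp)
    have X2: "0 \<le> X2" "X2 \<le> e"
    proof -
      show "0 \<le> X2" by (simp add: X2_def)
      have "X2 \<le> (9 / real p) * (2 * real p / real k)^2 / real m"
        unfolding X2_def using iQ by (intro divide_right_mono mult_right_mono) auto
      also have "\<dots> = 36 / w" using p1 k1 mb by (simp add: w_def field_simps power2_eq_square)
      also have "\<dots> \<le> e"
      proof -
        have "36 \<le> w * e" using w e0 by (simp add: pos_divide_le_eq)
        then show ?thesis using w0 by (simp add: pos_divide_le_eq mult.commute)
      qed
      finally show "X2 \<le> e" .
    qed
    have "measure_pmf.prob (rkg_pmf nn k p) {f. \<not> triangles nn f > 0} \<le>
        12*X1 + 12*X2 + 6*X1*X2 + 6*X2^2 + X2^3"
      using design_b[OF n3 K2 KP P3] unfolding X1_def X2_def m_def Q_def .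
    also have "\<dots> \<le> 37*e" by (rule Bb_small[OF X1 X2 e1])
    finally show ?thesis .
  qed
qed



lemma pf_tendsto:
  fixes P K :: "nat \<Rightarrow> nat"
  assumes scaling: "\<And>n. 1 \<le> K n \<and> K n \<le> P n"
    and lim: "filterlim (\<lambda>n. real n ^ 3 * tau_rkg (K n) (P n)) at_top sequentially"
  shows "(\<lambda>n. measure_pmf.prob (rkg_pmf n (K n) (P n)) {f. \<not> triangles n f > 0}) \<longlonglongrightarrow> 0"
proof (rule LIMSEQ_I)
  fix r :: real assume r: "0 < r"
  define e where "e = min 1 (r/74)"
  have e0: "0 < e" and e1: "e \<le> 1" and er: "37 * e < r" using r by (auto simp: e_def)
  define H where "H = 1458 * (36/e)^3"
  have ev1: "\<forall>\<^sub>F n in sequentially. H \<le> real n ^ 3 * tau_rkg (K n) (P n)"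
    using lim by (simp add: filterlim_at_top)
  have ev2: "\<forall>\<^sub>F n in sequentially. max (max 3 (81/e)) (2*H) \<le> real n"
  proof -
    have "\<forall>Z. \<forall>\<^sub>F x in sequentially. Z \<le> real x"
      using filterlim_real_sequentially filterlim_at_top by blast
    then show ?thesis by blast
  qed
  from eventually_conj[OF ev1 ev2] obtain N where N: "\<And>n. n \<ge> N \<Longrightarrow>
      H \<le> real n ^ 3 * tau_rkg (K n) (P n) \<and> max (max 3 (81/e)) (2*H) \<le> real n"
    unfolding eventually_sequentially by blast
  show "\<exists>no. \<forall>n\<ge>no. norm (measure_pmf.prob (rkg_pmf n (K n) (P n)) {f. \<not> triangles n f > 0} - 0) < r"
  proof (intro exI allI impI)
    fix n assume "N \<le> n"
    note Nn = N[OF this]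
    have n3: "3 \<le> n" using Nn by simp
    have "measure_pmf.prob (rkg_pmf n (K n) (P n)) {f. \<not> triangles n f > 0} \<le> 37 * e"
      by (rule pf_small[OF n3 _ _ e0 e1]) (use scaling[of n] Nn in \<open>auto simp: H_def\<close>)
    then show "norm (measure_pmf.prob (rkg_pmf n (K n) (P n)) {f. \<not> triangles n f > 0} - 0) < r"
      using er by simp
  qed
qed

theorem theorem2:
  fixes P K :: "nat \<Rightarrow> nat" and qstar :: real
  assumes scaling: "\<And>n. 1 \<le> K n \<and> K n \<le> P n"
    and qlim: "(\<lambda>n. q_rkg (K n) (P n)) \<longlonglongrightarrow> qstar"
    and cond: "(0 \<le> qstar \<and> qstar < 1) \<or>
               (qstar = 1 \<and> filterlim (\<lambda>n. real n ^ 3 * tau_rkg (K n) (P n)) at_top sequentially)"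
  shows "(\<lambda>n. prob_triangle n (K n) (P n)) \<longlonglongrightarrow> 1"
proof -
  have lim: "filterlim (\<lambda>n. real n ^ 3 * tau_rkg (K n) (P n)) at_top sequentially"
  proof (cases "0 \<le> qstar \<and> qstar < 1")
    case False
    then show ?thesis using cond by auto
  next
    case True
    define c where "c = (1 + qstar) / 2"
    have "qstar < c" using True by (simp add: c_def)
    then have evq: "\<forall>\<^sub>F n in sequentially. q_rkg (K n) (P n) < c"
      using order_tendstoD(2)[OF qlim] by blast
    define \<delta> where "\<delta> = 1 - c"
    have d0: "0 < \<delta>" using True by (simp add: \<delta>_def c_def)
    have base: "filterlim (\<lambda>n. \<delta>^3 * real n ^ 3) at_top sequentially"
      by (rule filterlim_tendsto_pos_mult_at_top[OF tendsto_const])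
         (use d0 in \<open>auto intro: filterlim_pow_at_top filterlim_real_sequentially\<close>)
    show ?thesis
    proof (rule filterlim_at_top_mono[OF base])
      show "\<forall>\<^sub>F n in sequentially. \<delta>^3 * real n ^ 3 \<le> real n ^ 3 * tau_rkg (K n) (P n)"
        using evq
      proof eventually_elim
        case (elim n)
        have "\<delta> \<le> real (K n)^2 / real (P n)"
          using q_lower[of "K n" "P n"] scaling[of n] elim by (simp add: \<delta>_def)
        then have "\<delta>^3 \<le> (real (K n)^2 / real (P n))^3" using d0 by (intro power_mono) auto
        also have "\<dots> \<le> tau_rkg (K n) (P n)" by (simp add: tau_rkg_def)
        finally show ?case by (simp add: mult.commute mult_right_mono)
      qed
    qed
  qed
  have pf: "(\<lambda>n. measure_pmf.prob (rkg_pmf n (K n) (P n)) {f. \<not> triangles n f > 0}) \<longlonglongrightarrow> 0"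
    by (rule pf_tendsto[OF scaling lim])
  have eq: "prob_triangle n (K n) (P n) = 1 - measure_pmf.prob (rkg_pmf n (K n) (P n)) {f. \<not> triangles n f > 0}" for n
  proof -
    have "{f. triangles n f > 0} = space (measure_pmf (rkg_pmf n (K n) (P n))) - {f. \<not> triangles n f > 0}"
      by auto
    moreover have "measure_pmf.prob (rkg_pmf n (K n) (P n)) (space (measure_pmf (rkg_pmf n (K n) (P n))) - {f. \<not> triangles n f > 0})
        = 1 - measure_pmf.prob (rkg_pmf n (K n) (P n)) {f. \<not> triangles n f > 0}"
      by (rule measure_pmf.prob_compl) simp
    ultimately show ?thesis unfolding prob_triangle_def by simp
  qed
  show ?thesis unfolding eq using tendsto_diff[OF tendsto_const pf, of 1] by simp
qed


end
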